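(* Let $f:\mathbb{R}^n\to\mathbb{R}$ be differentiable with $L$-Lipschitz gradient $\nabla f$, i.e. $\|\nabla f(x)-\nabla f(y)\|_2\le L\|x-y\|_2$ for all $x,y$. Suppose the estimators $G^t$ are independent versions of an unbiased estimator $G$ of $\nabla f$, and let $x^t$ be the iterates of stochastic Markov gradient descent (SMGD) with lattice resolution $\alpha>0$ and normalizer $\eta>0$. Let $\mathcal{E}^t$ denote the event that $\|G^t(x^t)\|_\infty\le\eta$. Then $$\mathbb{E}\left[f(x^{t+1})\,\middle|\,x^t,\mathcal{E}^t\right]\le f(x^t)+\frac{L\alpha^2}{2\eta}\,\mathbb{E}\left[\|G(x^t)\|_1\,\middle|\,x^t,\mathcal{E}^t\right]-\frac{\alpha}{\eta}\|\nabla f(x^t)\|_2^2 .$$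
   Context: SMGD: Let $f:\mathbb{R}^n\to\mathbb{R}$ be differentiable, $\alpha>0$, $\eta>0$, and $x^0\in\alpha\mathbb{Z}^n$. At step $t$ a random vector $G^t(x^t)\in\mathbb{R}^n$ (an estimate of $\nabla f(x^t)$) is drawn; then for each coordinate $i\in\{1,\dots,n\}$, conditionally on $G^t$ and $x^t$, $\Delta^t_i\in\{0,1\}$ is a Bernoulli random variable with $\mathbb{P}[\Delta^t_i=1\mid G^t,x^t]=\min(|G^t(x^t)_i|/\eta,1)$, and one sets $x^{t+1}_i=x^t_i-\alpha\,\mathrm{sgn}(G^t(x^t)_i)\,\Delta^t_i$. A random function $G:\mathbb{R}^n\to\mathbb{R}^n$ is an unbiased estimator of $\nabla f$ if $\mathbb{E}[G(x)]=\nabla f(x)$ for every $x$. Standing assumptions: $\{G^t\}$ are independent identically distributed copies of $G$; each $G^t$ is independent of $x^t$, so $\mathbb{E}[G^t(x^t)\mid x^t]=\nabla f(x^t)$; and moreover $\mathbb{E}[G^t(x^t)\mid x^t,\mathcal{E}^t]=\nabla f(x^t)$, where $\mathcal{E}^t$ is the event $\|G^t(x^t)\|_\infty\le\eta$. Subscript $i$ denotes the $i$-th coordinate. *)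

theory Defs
  imports "HOL-Probability.Probability"
begin

text \<open>Elementary conditional expectation of a random variable h given an event A
  (meaningful when A is an event of positive probability):
  E[h | A] = (1 / P(A)) * integral of h over A.\<close>
definition cond_exp_event :: "'a measure \<Rightarrow> 'a set \<Rightarrow> ('a \<Rightarrow> 'b::{banach, second_countable_topology}) \<Rightarrow> 'b" where
  "cond_exp_event M A h = (1 / measure M A) *\<^sub>R set_lebesgue_integral M A h"

definition norm1 :: "real ^ 'n \<Rightarrow> real" where
  "norm1 v = (\<Sum>i\<in>UNIV. \<bar>v $ i\<bar>)"

end

theory Submission
  imports Defs
begin

lemma descent:
  fixes f :: "real ^ 'n \<Rightarrow> real" and grad :: "real ^ 'n \<Rightarrow> real ^ 'n"
  assumes grad: "\<And>x. (f has_derivative (\<lambda>h. grad x \<bullet> h)) (at x)"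
    and lip: "\<And>x y. norm (grad x - grad y) \<le> L * norm (x - y)"
  shows "f (x + h) \<le> f x + grad x \<bullet> h + L / 2 * (norm h)\<^sup>2"
proof -
  define \<phi> where "\<phi> s = f (x + s *\<^sub>R h) - s * (grad x \<bullet> h) - L / 2 * s\<^sup>2 * (norm h)\<^sup>2" for s :: real
  have D: "DERIV \<phi> s :> (grad (x + s *\<^sub>R h) \<bullet> h - grad x \<bullet> h - L * s * (norm h)\<^sup>2)" for s
  proof -
    have l: "((\<lambda>s. x + s *\<^sub>R h) has_derivative (\<lambda>r. r *\<^sub>R h)) (at s)"
      by (auto intro!: derivative_eq_intros)
    have "((\<lambda>s. f (x + s *\<^sub>R h)) has_derivative (\<lambda>r. grad (x + s *\<^sub>R h) \<bullet> (r *\<^sub>R h))) (at s)"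
      using has_derivative_compose[OF l grad] by simp
    hence "((\<lambda>s. f (x + s *\<^sub>R h)) has_real_derivative (grad (x + s *\<^sub>R h) \<bullet> h)) (at s)"
      unfolding has_field_derivative_def by (simp add: mult.commute[of _ "grad (x + s *\<^sub>R h) \<bullet> h"])
    then show ?thesis unfolding \<phi>_def
      by (auto intro!: derivative_eq_intros)
  qed
  have "\<phi> 0 \<ge> \<phi> 1"
  proof (rule DERIV_nonpos_imp_nonincreasing[where f=\<phi>])
    fix s :: real assume s: "0 \<le> s" "s \<le> 1"
    have "(grad (x + s *\<^sub>R h) - grad x) \<bullet> h \<le> norm (grad (x + s *\<^sub>R h) - grad x) * norm h"
      by (rule norm_cauchy_schwarz)
    also have "\<dots> \<le> L * norm (s *\<^sub>R h) * norm h"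
      using lip[of "x + s *\<^sub>R h" x] by (intro mult_right_mono) auto
    also have "\<dots> = L * s * (norm h)\<^sup>2" using s by (simp add: power2_eq_square)
    finally show "\<exists>y. DERIV \<phi> s :> y \<and> y \<le> 0"
      using D[of s] by (intro exI[of _ "grad (x + s *\<^sub>R h) \<bullet> h - grad x \<bullet> h - L * s * (norm h)\<^sup>2"]) (auto simp: inner_diff_left)
  qed simp
  then show ?thesis unfolding \<phi>_def by simp
qed

lemma inf_meas[measurable]: "infnorm \<in> borel_measurable (borel :: (real^'n) measure)"
  by (intro borel_measurable_continuous_onI continuous_intros)
lemma nth_meas[measurable]: "f \<in> borel_measurable M \<Longrightarrow> (\<lambda>\<omega>. (f \<omega> :: real^'n) $ i) \<in> borel_measurable M"
  by (rule measurable_compose[OF _ borel_measurable_nth])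
lemma pair_sets: assumes [measurable]: "X \<in> borel_measurable M" "G \<in> borel_measurable M" and B: "B \<in> sets (borel :: ((real ^ 'n) \<times> (real ^ 'n)) measure)"
  shows "{\<omega> \<in> space M. (X \<omega> :: real^'n, G \<omega> :: real^'n) \<in> B} \<in> sets M"
proof -
  have "(\<lambda>\<omega>. (X \<omega>, G \<omega>)) \<in> M \<rightarrow>\<^sub>M (borel \<Otimes>\<^sub>M borel)" by measurable
  hence "(\<lambda>\<omega>. (X \<omega>, G \<omega>)) \<in> M \<rightarrow>\<^sub>M (borel :: ((real ^ 'n) \<times> (real ^ 'n)) measure)"
    by (simp add: borel_prod)
  from measurable_sets[OF this B] show ?thesis by (simp add: vimage_def Int_def conj_commute)
qed
theorem theorem4p1:
  fixes M :: "'a measure"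
    and f :: "real ^ 'n \<Rightarrow> real"
    and grad :: "real ^ 'n \<Rightarrow> real ^ 'n"
    and L \<alpha> \<eta> :: real
    and X :: "nat \<Rightarrow> 'a \<Rightarrow> real ^ 'n"
    and Gt :: "nat \<Rightarrow> 'a \<Rightarrow> real ^ 'n"
    and D :: "nat \<Rightarrow> 'a \<Rightarrow> real ^ 'n"
  assumes prob: "prob_space M"
    and grad: "\<And>x. (f has_derivative (\<lambda>h. grad x \<bullet> h)) (at x)"
    and lip: "\<And>x y. norm (grad x - grad y) \<le> L * norm (x - y)"
    and alpha: "\<alpha> > 0" and eta: "\<eta> > 0"
    and X_meas: "\<And>t. X t \<in> borel_measurable M"
    and G_meas: "\<And>t. Gt t \<in> borel_measurable M"
    and D_meas: "\<And>t. D t \<in> borel_measurable M"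
    and X0: "\<And>\<omega> i. \<omega> \<in> space M \<Longrightarrow> X 0 \<omega> $ i \<in> {\<alpha> * of_int k | k. True}"
    and step: "\<And>t \<omega> i. \<omega> \<in> space M \<Longrightarrow>
               X (Suc t) \<omega> $ i = X t \<omega> $ i - \<alpha> * sgn (Gt t \<omega> $ i) * D t \<omega> $ i"
    and D01: "\<And>t \<omega> i. \<omega> \<in> space M \<Longrightarrow> D t \<omega> $ i \<in> {0, 1}"
    and bern: "\<And>t i B. B \<in> sets (borel :: ((real ^ 'n) \<times> (real ^ 'n)) measure) \<Longrightarrow>
               measure M {\<omega> \<in> space M. D t \<omega> $ i = 1 \<and> (X t \<omega>, Gt t \<omega>) \<in> B}
               = (\<integral>\<omega>\<in>{\<omega> \<in> space M. (X t \<omega>, Gt t \<omega>) \<in> B}. min (\<bar>Gt t \<omega> $ i\<bar> / \<eta>) 1 \<partial>M)"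
    and unbiased: "\<And>t x. measure M {\<omega> \<in> space M. X t \<omega> = x} > 0 \<Longrightarrow>
               set_integrable M {\<omega> \<in> space M. X t \<omega> = x} (Gt t) \<and>
               cond_exp_event M {\<omega> \<in> space M. X t \<omega> = x} (Gt t) = grad x"
    and unbiased_E: "\<And>t x. measure M {\<omega> \<in> space M. X t \<omega> = x \<and> infnorm (Gt t \<omega>) \<le> \<eta>} > 0 \<Longrightarrow>
               set_integrable M {\<omega> \<in> space M. X t \<omega> = x \<and> infnorm (Gt t \<omega>) \<le> \<eta>} (Gt t) \<and>
               cond_exp_event M {\<omega> \<in> space M. X t \<omega> = x \<and> infnorm (Gt t \<omega>) \<le> \<eta>} (Gt t) = grad x"
    and pos: "measure M {\<omega> \<in> space M. X t \<omega> = x \<and> infnorm (Gt t \<omega>) \<le> \<eta>} > 0"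
  shows "cond_exp_event M {\<omega> \<in> space M. X t \<omega> = x \<and> infnorm (Gt t \<omega>) \<le> \<eta>} (\<lambda>\<omega>. f (X (Suc t) \<omega>))
         \<le> f x + L * \<alpha>\<^sup>2 / (2 * \<eta>) *
              cond_exp_event M {\<omega> \<in> space M. X t \<omega> = x \<and> infnorm (Gt t \<omega>) \<le> \<eta>} (\<lambda>\<omega>. norm1 (Gt t \<omega>))
           - \<alpha> / \<eta> * (norm (grad x))\<^sup>2"
  proof -
  interpret prob_space M by (rule prob)
  define A where "A = {\<omega> \<in> space M. X t \<omega> = x \<and> infnorm (Gt t \<omega>) \<le> \<eta>}"
  define PA where "PA = measure M A"
  have PA: "PA > 0" using pos unfolding PA_def A_def .
  note [measurable] = X_meas G_meas D_meas
  have A_sets[measurable]: "A \<in> sets M" unfolding A_def by measurable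
  have L0: "L \<ge> 0"
  proof -
    have "norm (grad (axis undefined 1) - grad 0) \<le> L * norm (axis undefined (1::real) - (0::real^'n))"
      by (rule lip)
    then show ?thesis using norm_ge_zero[of "grad (axis undefined 1) - grad 0"] by (simp del: norm_ge_zero)
  qed
  have intg: "integrable M h" if "h \<in> borel_measurable M" "\<And>\<omega>. \<omega> \<in> space M \<Longrightarrow> \<bar>h \<omega>\<bar> \<le> B"
    for h :: "'a \<Rightarrow> real" and B
    using that by (intro integrable_const_bound[where B=B]) auto
  have bern': "(\<integral>\<omega>. indicator {\<omega> \<in> space M. (X t \<omega>, Gt t \<omega>) \<in> B} \<omega> * D t \<omega> $ i \<partial>M)
      = (\<integral>\<omega>. indicator {\<omega> \<in> space M. (X t \<omega>, Gt t \<omega>) \<in> B} \<omega> * min (\<bar>Gt t \<omega> $ i\<bar> / \<eta>) 1 \<partial>M)"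
    if B: "B \<in> sets (borel :: ((real ^ 'n) \<times> (real ^ 'n)) measure)" for B i
  proof -
    have "(\<integral>\<omega>. indicator {\<omega> \<in> space M. (X t \<omega>, Gt t \<omega>) \<in> B} \<omega> * D t \<omega> $ i \<partial>M)
        = (\<integral>\<omega>. indicator {\<omega> \<in> space M. D t \<omega> $ i = 1 \<and> (X t \<omega>, Gt t \<omega>) \<in> B} \<omega> \<partial>M)"
      apply (rule Bochner_Integration.integral_cong[OF refl])
      using D01[of _ t i] by (auto simp: indicator_def)
    also have "\<dots> = measure M {\<omega> \<in> space M. D t \<omega> $ i = 1 \<and> (X t \<omega>, Gt t \<omega>) \<in> B}"
      by (simp add: Int_absorb2 subset_eq)
    also have "\<dots> = (\<integral>\<omega>. indicator {\<omega> \<in> space M. (X t \<omega>, Gt t \<omega>) \<in> B} \<omega> * min (\<bar>Gt t \<omega> $ i\<bar> / \<eta>) 1 \<partial>M)" using bern[OF B, of t i] by (simp add: set_lebesgue_integral_def)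
    finally show ?thesis .
  qed
  have Ssets: "{\<omega> \<in> space M. (X t \<omega>, Gt t \<omega>) \<in> B} \<in> sets M"
    if "B \<in> sets (borel :: ((real ^ 'n) \<times> (real ^ 'n)) measure)" for B
    by (rule pair_sets[OF X_meas G_meas that])
  have minA: "min (\<bar>Gt t \<omega> $ i\<bar> / \<eta>) 1 = \<bar>Gt t \<omega> $ i\<bar> / \<eta>" if "\<omega> \<in> A" for \<omega> i
  proof -
    have "\<bar>Gt t \<omega> $ i\<bar> \<le> \<eta>" using that component_le_infnorm_cart[of "Gt t \<omega>" i]
      unfolding A_def by auto
    then show ?thesis using eta by (simp add: min_def divide_le_eq_1)
  qed
  have dabs: "\<bar>D t \<omega> $ i\<bar> \<le> 1" if "\<omega> \<in> space M" for \<omega> i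
    using D01[OF that, of t i] by auto
  have E_sgn: "(\<integral>\<omega>. indicator A \<omega> * (sgn (Gt t \<omega> $ i) * D t \<omega> $ i) \<partial>M)
      = (\<integral>\<omega>. indicator A \<omega> * (Gt t \<omega> $ i / \<eta>) \<partial>M)" for i
  proof -
    define S1 where "S1 = {\<omega> \<in> space M. (X t \<omega>, Gt t \<omega>) \<in> {p \<in> space borel. fst p = x \<and> infnorm (snd p) \<le> \<eta> \<and> snd p $ i > 0}}"
    define S2 where "S2 = {\<omega> \<in> space M. (X t \<omega>, Gt t \<omega>) \<in> {p \<in> space borel. fst p = x \<and> infnorm (snd p) \<le> \<eta> \<and> snd p $ i < 0}}"
    have B1: "{p \<in> space borel. fst p = x \<and> infnorm (snd p) \<le> \<eta> \<and> snd p $ i > 0} \<in> sets (borel :: ((real ^ 'n) \<times> (real ^ 'n)) measure)"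
      unfolding borel_prod[symmetric] by measurable
    have B2: "{p \<in> space borel. fst p = x \<and> infnorm (snd p) \<le> \<eta> \<and> snd p $ i < 0} \<in> sets (borel :: ((real ^ 'n) \<times> (real ^ 'n)) measure)"
      unfolding borel_prod[symmetric] by measurable
    have S1s[measurable]: "S1 \<in> sets M" unfolding S1_def by (rule Ssets[OF B1])
    have S2s[measurable]: "S2 \<in> sets M" unfolding S2_def by (rule Ssets[OF B2])
    have mn: "0 \<le> min (\<bar>Gt t \<omega> $ i\<bar> / \<eta>) 1" "min (\<bar>Gt t \<omega> $ i\<bar> / \<eta>) 1 \<le> 1" for \<omega>
      using eta by auto
    have i1: "integrable M (\<lambda>\<omega>. indicator S1 \<omega> * D t \<omega> $ i)"
      by (rule intg[of _ 1]) (measurable, use dabs in \<open>auto simp: indicator_def\<close>)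
    have i2: "integrable M (\<lambda>\<omega>. indicator S2 \<omega> * D t \<omega> $ i)"
      by (rule intg[of _ 1]) (measurable, use dabs in \<open>auto simp: indicator_def\<close>)
    have j1: "integrable M (\<lambda>\<omega>. indicator S1 \<omega> * min (\<bar>Gt t \<omega> $ i\<bar> / \<eta>) 1)"
      by (rule intg[of _ 1]) (measurable, use mn in \<open>auto simp: indicator_def\<close>)
    have j2: "integrable M (\<lambda>\<omega>. indicator S2 \<omega> * min (\<bar>Gt t \<omega> $ i\<bar> / \<eta>) 1)"
      by (rule intg[of _ 1]) (measurable, use mn in \<open>auto simp: indicator_def\<close>)
    have "(\<integral>\<omega>. indicator A \<omega> * (sgn (Gt t \<omega> $ i) * D t \<omega> $ i) \<partial>M)
        = (\<integral>\<omega>. indicator S1 \<omega> * D t \<omega> $ i - indicator S2 \<omega> * D t \<omega> $ i \<partial>M)"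
      by (rule Bochner_Integration.integral_cong[OF refl]) (auto simp: indicator_def A_def S1_def S2_def sgn_real_def)
    also have "\<dots> = (\<integral>\<omega>. indicator S1 \<omega> * D t \<omega> $ i \<partial>M) - (\<integral>\<omega>. indicator S2 \<omega> * D t \<omega> $ i \<partial>M)"
      by (rule Bochner_Integration.integral_diff[OF i1 i2])
    also have "\<dots> = (\<integral>\<omega>. indicator S1 \<omega> * min (\<bar>Gt t \<omega> $ i\<bar> / \<eta>) 1 \<partial>M) - (\<integral>\<omega>. indicator S2 \<omega> * min (\<bar>Gt t \<omega> $ i\<bar> / \<eta>) 1 \<partial>M)"
      unfolding S1_def S2_def by (simp only: bern'[OF B1] bern'[OF B2])
    also have "\<dots> = (\<integral>\<omega>. indicator S1 \<omega> * min (\<bar>Gt t \<omega> $ i\<bar> / \<eta>) 1 - indicator S2 \<omega> * min (\<bar>Gt t \<omega> $ i\<bar> / \<eta>) 1 \<partial>M)"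
      by (rule Bochner_Integration.integral_diff[OF j1 j2, symmetric])
    also have "\<dots> = (\<integral>\<omega>. indicator A \<omega> * (Gt t \<omega> $ i / \<eta>) \<partial>M)"
    proof (rule Bochner_Integration.integral_cong[OF refl])
      fix \<omega> assume "\<omega> \<in> space M"
      show "indicator S1 \<omega> * min (\<bar>Gt t \<omega> $ i\<bar> / \<eta>) 1 - indicator S2 \<omega> * min (\<bar>Gt t \<omega> $ i\<bar> / \<eta>) 1
          = indicator A \<omega> * (Gt t \<omega> $ i / \<eta>)"
      proof (cases "\<omega> \<in> A")
        case True
        then show ?thesis using minA[OF True, of i] \<open>\<omega> \<in> space M\<close>
          by (cases "Gt t \<omega> $ i > 0"; cases "Gt t \<omega> $ i < 0") (auto simp: indicator_def A_def S1_def S2_def)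
      next
        case False
        then show ?thesis by (auto simp: indicator_def A_def S1_def S2_def)
      qed
    qed
    finally show ?thesis .
  qed
  have E_d: "(\<integral>\<omega>. indicator A \<omega> * D t \<omega> $ i \<partial>M) = (\<integral>\<omega>. indicator A \<omega> * (\<bar>Gt t \<omega> $ i\<bar> / \<eta>) \<partial>M)" for i
  proof -
    have B0: "{p \<in> space borel. fst p = x \<and> infnorm (snd p) \<le> \<eta>} \<in> sets (borel :: ((real ^ 'n) \<times> (real ^ 'n)) measure)"
      unfolding borel_prod[symmetric] by measurable
    have AS: "A = {\<omega> \<in> space M. (X t \<omega>, Gt t \<omega>) \<in> {p \<in> space borel. fst p = x \<and> infnorm (snd p) \<le> \<eta>}}"
      unfolding A_def by auto
    have "(\<integral>\<omega>. indicator A \<omega> * D t \<omega> $ i \<partial>M) = (\<integral>\<omega>. indicator A \<omega> * min (\<bar>Gt t \<omega> $ i\<bar> / \<eta>) 1 \<partial>M)"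
      unfolding AS by (rule bern'[OF B0])
    also have "\<dots> = (\<integral>\<omega>. indicator A \<omega> * (\<bar>Gt t \<omega> $ i\<bar> / \<eta>) \<partial>M)"
      by (rule Bochner_Integration.integral_cong[OF refl]) (auto simp: indicator_def minA)
    finally show ?thesis .
  qed
  have UE: "set_integrable M A (Gt t) \<and> cond_exp_event M A (Gt t) = grad x"
    using unbiased_E[OF pos] unfolding A_def .
  have SI: "integrable M (\<lambda>\<omega>. indicator A \<omega> *\<^sub>R Gt t \<omega>)"
    using UE by (simp add: set_integrable_def)
  have V: "set_lebesgue_integral M A (Gt t) = PA *\<^sub>R grad x"
  proof -
    have "(1 / PA) *\<^sub>R set_lebesgue_integral M A (Gt t) = grad x"
      using UE unfolding cond_exp_event_def PA_def by simp
    moreover have "set_lebesgue_integral M A (Gt t) = PA *\<^sub>R ((1 / PA) *\<^sub>R set_lebesgue_integral M A (Gt t))"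
      using PA by simp
    ultimately show ?thesis by simp
  qed
  have E_g: "(\<integral>\<omega>. indicator A \<omega> * Gt t \<omega> $ i \<partial>M) = PA * grad x $ i" for i
  proof -
    have "(\<integral>\<omega>. indicator A \<omega> * Gt t \<omega> $ i \<partial>M) = (\<integral>\<omega>. (indicator A \<omega> *\<^sub>R Gt t \<omega>) \<bullet> axis i 1 \<partial>M)"
      by (rule Bochner_Integration.integral_cong[OF refl]) (simp add: inner_axis)
    also have "\<dots> = (\<integral>\<omega>. indicator A \<omega> *\<^sub>R Gt t \<omega> \<partial>M) \<bullet> axis i 1"
      by (rule integral_inner_left) (rule SI)
    also have "\<dots> = PA * grad x $ i" using V by (simp add: set_lebesgue_integral_def inner_axis)
    finally show ?thesis .
  qed
  define U where "U \<omega> = indicator A \<omega> * f x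
      - \<alpha> * (\<Sum>i\<in>UNIV. grad x $ i * (indicator A \<omega> * (sgn (Gt t \<omega> $ i) * D t \<omega> $ i)))
      + L / 2 * \<alpha>\<^sup>2 * (\<Sum>i\<in>UNIV. indicator A \<omega> * D t \<omega> $ i)" for \<omega>
  have hX: "X (Suc t) \<omega> - x = (\<chi> i. - (\<alpha> * (sgn (Gt t \<omega> $ i) * D t \<omega> $ i)))" if "\<omega> \<in> A" for \<omega>
  proof -
    have "\<omega> \<in> space M" "X t \<omega> = x" using that unfolding A_def by auto
    then show ?thesis unfolding vec_eq_iff using step[of \<omega> t] by simp
  qed
  have pw: "indicator A \<omega> * f (X (Suc t) \<omega>) \<le> U \<omega>" if "\<omega> \<in> space M" for \<omega>
  proof (cases "\<omega> \<in> A")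
    case False then show ?thesis by (simp add: U_def)
  next
    case True
    define h where "h = X (Suc t) \<omega> - x"
    have hi: "h $ i = - (\<alpha> * (sgn (Gt t \<omega> $ i) * D t \<omega> $ i))" for i
      using hX[OF True] unfolding h_def by simp
    have XS: "X (Suc t) \<omega> = x + h" unfolding h_def by simp
    have gi: "grad x \<bullet> h = - \<alpha> * (\<Sum>i\<in>UNIV. grad x $ i * (sgn (Gt t \<omega> $ i) * D t \<omega> $ i))"
    proof -
      have "grad x \<bullet> h = (\<Sum>i\<in>UNIV. (- \<alpha>) * (grad x $ i * (sgn (Gt t \<omega> $ i) * D t \<omega> $ i)))"
        unfolding inner_vec_def hi inner_real_def by (intro sum.cong refl) (simp only: mult_minus_right mult_minus_left mult.left_commute)
      then show ?thesis by (simp only: sum_distrib_left)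
    qed
    have "(norm h)\<^sup>2 = (\<Sum>i\<in>UNIV. (h $ i)\<^sup>2)"
      unfolding power2_norm_eq_inner inner_vec_def by (simp add: power2_eq_square)
    also have "\<dots> \<le> (\<Sum>i\<in>UNIV. \<alpha>\<^sup>2 * D t \<omega> $ i)"
    proof (rule sum_mono)
      fix i
      have "D t \<omega> $ i \<in> {0, 1}" using D01 that by auto
      then show "(h $ i)\<^sup>2 \<le> \<alpha>\<^sup>2 * D t \<omega> $ i"
        unfolding hi by (auto simp: sgn_real_def power2_eq_square)
    qed
    finally have nh: "(norm h)\<^sup>2 \<le> \<alpha>\<^sup>2 * (\<Sum>i\<in>UNIV. D t \<omega> $ i)" by (simp add: sum_distrib_left)
    have "f (X (Suc t) \<omega>) \<le> f x + grad x \<bullet> h + L / 2 * (norm h)\<^sup>2"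
      unfolding XS by (rule descent[OF grad lip])
    also have "\<dots> \<le> f x + grad x \<bullet> h + L / 2 * (\<alpha>\<^sup>2 * (\<Sum>i\<in>UNIV. D t \<omega> $ i))"
      using nh L0 by (intro add_left_mono mult_left_mono) auto
    finally show ?thesis using True by (simp add: U_def gi)
  qed
  have gA: "\<bar>Gt t \<omega> $ i\<bar> \<le> \<eta>" if "\<omega> \<in> A" for \<omega> i
    using that component_le_infnorm_cart[of "Gt t \<omega>" i] unfolding A_def by auto
  have iSD: "integrable M (\<lambda>\<omega>. indicator A \<omega> * (sgn (Gt t \<omega> $ i) * D t \<omega> $ i))" for i
    by (rule intg[of _ 1]) (measurable, use dabs in \<open>auto simp: indicator_def abs_mult sgn_real_def\<close>)
  have iD: "integrable M (\<lambda>\<omega>. indicator A \<omega> * D t \<omega> $ i)" for i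
    by (rule intg[of _ 1]) (measurable, use dabs in \<open>auto simp: indicator_def\<close>)
  have iG: "integrable M (\<lambda>\<omega>. indicator A \<omega> * \<bar>Gt t \<omega> $ i\<bar>)" for i
    by (rule intg[of _ \<eta>]) (measurable, use gA eta in \<open>auto simp: indicator_def\<close>)
  have iC: "integrable M (\<lambda>\<omega>. indicator A \<omega> * f x)"
    by (rule intg[of _ "\<bar>f x\<bar>"]) (measurable, auto simp: indicator_def)
  have contf: "continuous_on UNIV f"
    using grad by (intro continuous_at_imp_continuous_on ballI has_derivative_continuous) blast
  have fX_meas[measurable]: "(\<lambda>\<omega>. f (X (Suc t) \<omega>)) \<in> borel_measurable M"
    using measurable_compose[OF X_meas borel_measurable_continuous_onI[OF contf]] by simp
  obtain Bf where Bf: "\<And>y. y \<in> cball x (real CARD('n) * \<alpha>) \<Longrightarrow> \<bar>f y\<bar> \<le> Bf"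
  proof -
    have "compact (f ` cball x (real CARD('n) * \<alpha>))"
      by (rule compact_continuous_image[OF continuous_on_subset[OF contf] compact_cball]) auto
    then obtain B where "\<forall>z\<in>f ` cball x (real CARD('n) * \<alpha>). norm z \<le> B"
      using compact_imp_bounded bounded_iff by metis
    then show ?thesis using that[of B] by auto
  qed
  have iF: "integrable M (\<lambda>\<omega>. indicator A \<omega> * f (X (Suc t) \<omega>))"
  proof (rule intg[of _ Bf])
    fix \<omega> assume "\<omega> \<in> space M"
    show "\<bar>indicator A \<omega> * f (X (Suc t) \<omega>)\<bar> \<le> Bf"
    proof (cases "\<omega> \<in> A")
      case True
      have "norm (X (Suc t) \<omega> - x) \<le> (\<Sum>i\<in>UNIV. \<bar>(X (Suc t) \<omega> - x) $ i\<bar>)" by (rule norm_le_l1_cart)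
      also have "\<dots> \<le> (\<Sum>i\<in>(UNIV::'n set). \<alpha>)"
      proof (rule sum_mono)
        fix i
        have "D t \<omega> $ i \<in> {0, 1}" using D01 \<open>\<omega> \<in> space M\<close> by auto
        then show "\<bar>(X (Suc t) \<omega> - x) $ i\<bar> \<le> \<alpha>"
          unfolding hX[OF True] using alpha by (auto simp: sgn_real_def)
      qed
      finally have "X (Suc t) \<omega> \<in> cball x (real CARD('n) * \<alpha>)"
        by (simp add: dist_norm norm_minus_commute)
      then show ?thesis using True Bf by (simp add: indicator_def)
    next
      case False
      have "\<bar>f x\<bar> \<le> Bf" using Bf[of x] alpha by simp
      then show ?thesis using False by simp
    qed
  qed simp
  have iU: "integrable M U"
    unfolding U_def using iC iSD iD
    by (intro Bochner_Integration.integrable_add Bochner_Integration.integrable_diff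
        integrable_mult_right Bochner_Integration.integrable_sum) auto
  have intU: "integral\<^sup>L M U = PA * f x
      - \<alpha> * (\<Sum>i\<in>UNIV. grad x $ i * (\<integral>\<omega>. indicator A \<omega> * (sgn (Gt t \<omega> $ i) * D t \<omega> $ i) \<partial>M))
      + L / 2 * \<alpha>\<^sup>2 * (\<Sum>i\<in>UNIV. (\<integral>\<omega>. indicator A \<omega> * D t \<omega> $ i \<partial>M))"
  proof -
    have i2: "integrable M (\<lambda>\<omega>. \<alpha> * (\<Sum>i\<in>UNIV. grad x $ i * (indicator A \<omega> * (sgn (Gt t \<omega> $ i) * D t \<omega> $ i))))"
      using iSD by (intro integrable_mult_right Bochner_Integration.integrable_sum) auto
    have i3: "integrable M (\<lambda>\<omega>. L / 2 * \<alpha>\<^sup>2 * (\<Sum>i\<in>UNIV. indicator A \<omega> * D t \<omega> $ i))"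
      using iD by (intro integrable_mult_right Bochner_Integration.integrable_sum) auto
    have "integral\<^sup>L M U = (\<integral>\<omega>. indicator A \<omega> * f x \<partial>M)
       - (\<integral>\<omega>. \<alpha> * (\<Sum>i\<in>UNIV. grad x $ i * (indicator A \<omega> * (sgn (Gt t \<omega> $ i) * D t \<omega> $ i))) \<partial>M)
       + (\<integral>\<omega>. L / 2 * \<alpha>\<^sup>2 * (\<Sum>i\<in>UNIV. indicator A \<omega> * D t \<omega> $ i) \<partial>M)"
      unfolding U_def
      by (subst Bochner_Integration.integral_add; (intro Bochner_Integration.integrable_diff iC i2 i3)?)
         (subst Bochner_Integration.integral_diff; (intro iC i2)?; simp)
    also have "\<dots> = PA * f x
      - \<alpha> * (\<Sum>i\<in>UNIV. grad x $ i * (\<integral>\<omega>. indicator A \<omega> * (sgn (Gt t \<omega> $ i) * D t \<omega> $ i) \<partial>M))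
      + L / 2 * \<alpha>\<^sup>2 * (\<Sum>i\<in>UNIV. (\<integral>\<omega>. indicator A \<omega> * D t \<omega> $ i \<partial>M))"
    proof -
      have s1: "(\<integral>\<omega>. indicator A \<omega> * f x \<partial>M) = PA * f x"
        by (simp add: PA_def Int_absorb2 sets.sets_into_space)
      have s2: "(\<integral>\<omega>. \<alpha> * (\<Sum>i\<in>UNIV. grad x $ i * (indicator A \<omega> * (sgn (Gt t \<omega> $ i) * D t \<omega> $ i))) \<partial>M)
          = \<alpha> * (\<Sum>i\<in>UNIV. grad x $ i * (\<integral>\<omega>. indicator A \<omega> * (sgn (Gt t \<omega> $ i) * D t \<omega> $ i) \<partial>M))"
        apply (subst integral_mult_right_zero)
        apply (subst Bochner_Integration.integral_sum)
        using iSD apply (intro integrable_mult_right; simp)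
        apply (subst integral_mult_right_zero)
        apply (rule refl)
        done
      have s3: "(\<integral>\<omega>. L / 2 * \<alpha>\<^sup>2 * (\<Sum>i\<in>UNIV. indicator A \<omega> * D t \<omega> $ i) \<partial>M)
          = L / 2 * \<alpha>\<^sup>2 * (\<Sum>i\<in>UNIV. (\<integral>\<omega>. indicator A \<omega> * D t \<omega> $ i \<partial>M))"
        apply (subst integral_mult_right_zero)
        apply (subst Bochner_Integration.integral_sum)
        using iD apply simp
        apply (rule refl)
        done
      show ?thesis unfolding s1 s2 s3 ..
    qed
    finally show ?thesis .
  qed
  have ce: "cond_exp_event M A h = (1 / PA) * (\<integral>\<omega>. indicator A \<omega> * h \<omega> \<partial>M)" for h :: "'a \<Rightarrow> real"
    by (simp add: cond_exp_event_def set_lebesgue_integral_def PA_def)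
  define N where "N = (\<integral>\<omega>. indicator A \<omega> * norm1 (Gt t \<omega>) \<partial>M)"
  define S where "S = (\<Sum>i\<in>UNIV. grad x $ i * grad x $ i)"
  have S: "(norm (grad x))\<^sup>2 = S"
    unfolding S_def power2_norm_eq_inner inner_vec_def by simp
  have e1: "(\<integral>\<omega>. indicator A \<omega> * (sgn (Gt t \<omega> $ i) * D t \<omega> $ i) \<partial>M) = PA * grad x $ i / \<eta>" for i
  proof -
    have "(\<integral>\<omega>. indicator A \<omega> * (Gt t \<omega> $ i / \<eta>) \<partial>M) = (\<integral>\<omega>. indicator A \<omega> * Gt t \<omega> $ i / \<eta> \<partial>M)"
      by simp
    also have "\<dots> = PA * grad x $ i / \<eta>" by (simp only: integral_divide_zero E_g)
    finally show ?thesis using E_sgn[of i] by simp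
  qed
  have e2: "(\<Sum>i\<in>UNIV. (\<integral>\<omega>. indicator A \<omega> * D t \<omega> $ i \<partial>M)) = N / \<eta>"
  proof -
    have "(\<Sum>i\<in>UNIV. (\<integral>\<omega>. indicator A \<omega> * D t \<omega> $ i \<partial>M)) = (\<Sum>i\<in>UNIV. (\<integral>\<omega>. indicator A \<omega> * \<bar>Gt t \<omega> $ i\<bar> \<partial>M) / \<eta>)"
      by (simp add: E_d)
    also have "\<dots> = (\<Sum>i\<in>UNIV. (\<integral>\<omega>. indicator A \<omega> * \<bar>Gt t \<omega> $ i\<bar> \<partial>M)) / \<eta>"
      by (simp add: sum_divide_distrib)
    also have "(\<Sum>i\<in>UNIV. (\<integral>\<omega>. indicator A \<omega> * \<bar>Gt t \<omega> $ i\<bar> \<partial>M)) = N"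
      unfolding N_def norm1_def sum_distrib_left
      by (rule Bochner_Integration.integral_sum[symmetric]) (rule iG)
    finally show ?thesis .
  qed
  have main: "(\<integral>\<omega>. indicator A \<omega> * f (X (Suc t) \<omega>) \<partial>M) \<le> PA * f x - \<alpha> * (PA / \<eta> * S) + L / 2 * \<alpha>\<^sup>2 * (N / \<eta>)"
  proof -
    have "(\<integral>\<omega>. indicator A \<omega> * f (X (Suc t) \<omega>) \<partial>M) \<le> integral\<^sup>L M U"
      by (rule integral_mono[OF iF iU pw])
    also have "\<dots> = PA * f x - \<alpha> * (\<Sum>i\<in>UNIV. grad x $ i * (PA * grad x $ i / \<eta>)) + L / 2 * \<alpha>\<^sup>2 * (N / \<eta>)"
      unfolding intU e1 e2 ..
    also have "(\<Sum>i\<in>UNIV. grad x $ i * (PA * grad x $ i / \<eta>)) = PA / \<eta> * S"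
      unfolding S_def sum_distrib_left by (intro sum.cong refl) simp
    finally show ?thesis .
  qed
  have "cond_exp_event M A (\<lambda>\<omega>. f (X (Suc t) \<omega>)) \<le> (1 / PA) * (PA * f x - \<alpha> * (PA / \<eta> * S) + L / 2 * \<alpha>\<^sup>2 * (N / \<eta>))"
    unfolding ce using main PA by (intro mult_left_mono) auto
  also have "\<dots> = f x + L * \<alpha>\<^sup>2 / (2 * \<eta>) * cond_exp_event M A (\<lambda>\<omega>. norm1 (Gt t \<omega>)) - \<alpha> / \<eta> * S"
    unfolding ce N_def[symmetric] using PA eta by (simp add: field_simps)
  finally show ?thesis unfolding A_def S .
qed

end
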